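(* Let $(H;\langle\cdot,\cdot\rangle)$ be a real inner product space with norm $\|\cdot\|$, and let $a,b,x,y\in H\setminus\{0\}$. (i) If there exist $\delta_1,\delta_2\in(0,1]$ with $\delta_1+\delta_2\ge 1$ such that $$\frac{\langle x,a\rangle}{\|x\|\,\|a\|}\ge\delta_1,\qquad \frac{\langle y,a\rangle}{\|y\|\,\|a\|}\ge\delta_2,$$ then $$\frac{\langle x,y\rangle}{\|x\|\,\|y\|}\ge \frac12(\delta_1+\delta_2)^2-\frac32\qquad(\ge -1).$$ (ii) If there exists $\mu_1\in\mathbb{R}$ with $0\le\mu_1\le 1$ such that $\mu_1\|a\|\,\|b\|\le \dfrac{\langle x,a\rangle\langle x,b\rangle}{\|x\|^2}$, then $$-1\le 2\mu_1-1\le \frac{\langle a,b\rangle}{\|a\|\,\|b\|}.$$ If there exists $\mu_2\in\mathbb{R}$ with $-1\le\mu_2\le 0$ such that $\dfrac{\langle x,a\rangle\langle x,b\rangle}{\|x\|^2}\le \mu_2\|a\|\,\|b\|$, then $$\frac{\langle a,b\rangle}{\|a\|\,\|b\|}\le 2\mu_2+1\le 1.$$ *)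

theory Defs
  imports "HOL-Analysis.Analysis"
begin

end

theory Submission
  imports Defs
begin

lemma inner_sgn_eq:
  fixes x y :: "'a :: real_inner"
  shows "inner (sgn x) (sgn y) = inner x y / (norm x * norm y)"
  by (simp add: sgn_div_norm divide_inverse inner_scaleR_left inner_scaleR_right mult.commute mult.left_commute)

lemma unitA:
  fixes u v e :: "'a :: real_inner"
  assumes "norm u = 1" "norm v = 1" "norm e = 1" "inner u e + inner v e \<ge> 0"
  shows "inner u v \<ge> (inner u e + inner v e)^2/2 - 1"
proof -
  have "inner (u+v) e \<le> norm (u+v)" using norm_cauchy_schwarz[of "u+v" e] assms by simp
  hence "(inner u e + inner v e)^2 \<le> (norm (u+v))^2"
    using assms(4) by (simp add: inner_add_left power_mono)
  also have "(norm (u+v))^2 = 2 + 2 * inner u v"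
    using assms power2_norm_eq_inner[of u] power2_norm_eq_inner[of v] by (simp add: power2_norm_eq_inner inner_add_left inner_add_right inner_commute)
  finally show ?thesis by simp
qed

lemma unitB:
  fixes u e f :: "'a :: real_inner"
  assumes "norm u = 1" "norm e = 1" "norm f = 1"
  shows "inner e f \<ge> 2 * (inner u e * inner u f) - 1"
    and "inner e f \<le> 2 * (inner u e * inner u f) + 1"
proof -
  have h1: "(inner u (e+f))^2 \<le> (norm (e+f))^2"
  proof -
    have "\<bar>inner u (e+f)\<bar> \<le> norm (e+f)" using Cauchy_Schwarz_ineq2[of u "e+f"] assms by simp
    hence "\<bar>inner u (e+f)\<bar>^2 \<le> (norm (e+f))^2" by (intro power_mono) auto
    thus ?thesis by simp
  qed
  have h2: "(inner u (e-f))^2 \<le> (norm (e-f))^2"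
  proof -
    have "\<bar>inner u (e-f)\<bar> \<le> norm (e-f)" using Cauchy_Schwarz_ineq2[of u "e-f"] assms by simp
    hence "\<bar>inner u (e-f)\<bar>^2 \<le> (norm (e-f))^2" by (intro power_mono) auto
    thus ?thesis by simp
  qed
  have ee: "inner e e = 1" "inner f f = 1" using assms power2_norm_eq_inner[of e] power2_norm_eq_inner[of f] by auto
  have n1: "(norm (e+f))^2 = 2 + 2 * inner e f"
    using ee by (simp add: power2_norm_eq_inner inner_add_left inner_add_right inner_commute)
  have n2: "(norm (e-f))^2 = 2 - 2 * inner e f"
    using ee by (simp add: power2_norm_eq_inner inner_diff_left inner_diff_right inner_commute)
  have e1: "(inner u (e+f))^2 = (inner u e + inner u f)^2" by (simp add: inner_add_right)
  have e2: "(inner u (e-f))^2 = (inner u e - inner u f)^2" by (simp add: inner_diff_right)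
  have s1: "(inner u e + inner u f)^2 \<ge> 4 * (inner u e * inner u f)"
  proof -
    have "(inner u e + inner u f)^2 = 4 * (inner u e * inner u f) + (inner u e - inner u f)^2"
      by (simp add: power2_eq_square algebra_simps)
    thus ?thesis using zero_le_power2[of "inner u e - inner u f"] by linarith
  qed
  have s2: "(inner u e - inner u f)^2 \<ge> - 4 * (inner u e * inner u f)"
  proof -
    have "(inner u e - inner u f)^2 = - 4 * (inner u e * inner u f) + (inner u e + inner u f)^2"
      by (simp add: power2_eq_square algebra_simps)
    thus ?thesis using zero_le_power2[of "inner u e + inner u f"] by linarith
  qed
  show "inner e f \<ge> 2 * (inner u e * inner u f) - 1" using h1 n1 e1 s1 by linarith
  show "inner e f \<le> 2 * (inner u e * inner u f) + 1" using h2 n2 e2 s2 by linarith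
qed

lemma transl:
  fixes a b x :: "'a :: real_inner"
  assumes "a \<noteq> 0" "b \<noteq> 0" "x \<noteq> 0"
  shows "inner x a * inner x b / (norm x)^2 = (inner (sgn x) (sgn a) * inner (sgn x) (sgn b)) * (norm a * norm b)"
  using assms by (simp add: inner_sgn_eq power2_eq_square field_simps)

theorem theorem1p5:
  fixes a b x y :: "'a :: real_inner"
  assumes "a \<noteq> 0" and "b \<noteq> 0" and "x \<noteq> 0" and "y \<noteq> 0"
  shows "(\<forall>\<delta>1 \<delta>2 :: real.
            \<delta>1 \<in> {0<..1} \<and> \<delta>2 \<in> {0<..1} \<and> \<delta>1 + \<delta>2 \<ge> 1 \<and>
            inner x a / (norm x * norm a) \<ge> \<delta>1 \<and>
            inner y a / (norm y * norm a) \<ge> \<delta>2 \<longrightarrow>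
              inner x y / (norm x * norm y) \<ge> (\<delta>1 + \<delta>2)^2 / 2 - 3/2 \<and>
              (\<delta>1 + \<delta>2)^2 / 2 - 3/2 \<ge> -1)
       \<and> (\<forall>\<mu>1 :: real. 0 \<le> \<mu>1 \<and> \<mu>1 \<le> 1 \<and>
            \<mu>1 * norm a * norm b \<le> inner x a * inner x b / (norm x)^2 \<longrightarrow>
              -1 \<le> 2 * \<mu>1 - 1 \<and> 2 * \<mu>1 - 1 \<le> inner a b / (norm a * norm b))
       \<and> (\<forall>\<mu>2 :: real. -1 \<le> \<mu>2 \<and> \<mu>2 \<le> 0 \<and>
            inner x a * inner x b / (norm x)^2 \<le> \<mu>2 * norm a * norm b \<longrightarrow>
              inner a b / (norm a * norm b) \<le> 2 * \<mu>2 + 1 \<and> 2 * \<mu>2 + 1 \<le> 1)"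
proof (intro conjI allI impI)
  have nu: "norm (sgn x) = 1" "norm (sgn y) = 1" "norm (sgn a) = 1" "norm (sgn b) = 1"
    using assms by (simp_all add: norm_sgn)
  have pab: "norm a * norm b > 0" using assms by simp
  fix d1 d2 :: real
  assume H: "d1 \<in> {0<..1} \<and> d2 \<in> {0<..1} \<and> d1 + d2 \<ge> 1 \<and>
            inner x a / (norm x * norm a) \<ge> d1 \<and> inner y a / (norm y * norm a) \<ge> d2"
  let ?c1 = "inner (sgn x) (sgn a)" and ?c2 = "inner (sgn y) (sgn a)"
  have c: "?c1 \<ge> d1" "?c2 \<ge> d2" using H by (simp_all add: inner_sgn_eq)
  have A: "inner (sgn x) (sgn y) \<ge> (?c1 + ?c2)^2/2 - 1"
    using unitA[OF nu(1,2,3)] c H by linarith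
  have "(d1+d2)^2 \<le> (?c1 + ?c2)^2" using c H by (intro power_mono) auto
  then show "inner x y / (norm x * norm y) \<ge> (d1 + d2)^2 / 2 - 3/2"
    using A by (simp add: inner_sgn_eq)
  have "1 \<le> (d1+d2)^2" using H by (simp add: one_le_power)
  then show "(d1 + d2)^2 / 2 - 3/2 \<ge> -1" by simp
next
  have nu: "norm (sgn x) = 1" "norm (sgn a) = 1" "norm (sgn b) = 1"
    using assms by (simp_all add: norm_sgn)
  have pab: "norm a * norm b > 0" using assms by simp
  fix m :: real
  assume H: "0 \<le> m \<and> m \<le> 1 \<and> m * norm a * norm b \<le> inner x a * inner x b / (norm x)^2"
  then show "-1 \<le> 2 * m - 1" by simp
  have "m * (norm a * norm b) \<le> (inner (sgn x) (sgn a) * inner (sgn x) (sgn b)) * (norm a * norm b)"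
    using H transl[OF assms(1-3)] by (simp add: mult.assoc)
  hence "m \<le> inner (sgn x) (sgn a) * inner (sgn x) (sgn b)" using pab by (meson mult_le_cancel_right_pos)
  then show "2 * m - 1 \<le> inner a b / (norm a * norm b)"
    using unitB(1)[OF nu] by (simp add: inner_sgn_eq)
next
  have nu: "norm (sgn x) = 1" "norm (sgn a) = 1" "norm (sgn b) = 1"
    using assms by (simp_all add: norm_sgn)
  have pab: "norm a * norm b > 0" using assms by simp
  fix m :: real
  assume H: "-1 \<le> m \<and> m \<le> 0 \<and> inner x a * inner x b / (norm x)^2 \<le> m * norm a * norm b"
  then show "2 * m + 1 \<le> 1" by simp
  have "(inner (sgn x) (sgn a) * inner (sgn x) (sgn b)) * (norm a * norm b) \<le> m * (norm a * norm b)"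
    using H transl[OF assms(1-3)] by (simp add: mult.assoc)
  hence "inner (sgn x) (sgn a) * inner (sgn x) (sgn b) \<le> m" using pab by (meson mult_le_cancel_right_pos)
  then show "inner a b / (norm a * norm b) \<le> 2 * m + 1"
    using unitB(2)[OF nu] by (simp add: inner_sgn_eq)
qed

end
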